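(* Let $a_1\ge1$ be an integer and $n \ge 4$ an even integer. Suppose that $p$ is a high primitive divisor of $\ell_n$ such that $(D \mid p) = -1$, and put $v := \nu_p(\ell_n)$. Then there exists $\bm{x} \in \mathcal{L}(f)$ such that $\tau(\bm{x}; p^v) = 2n$, $x_s \not\equiv x_t \pmod{p^v}$ for all integers $s,t$ with $0 < s < t < 2n$ and $s \equiv t \pmod 2$, and $x_j \not\equiv 0 \pmod{p^v}$ for all $j \ge 0$.
   Context: Let $f := X^2 - a_1X - 1$, $D := a_1^2+4$, and $\alpha,\beta$ the roots of $f$ ($\alpha\beta=-1$, $\alpha+\beta=a_1$). $\mathcal{L}(f)$ is the set of integer sequences $\bm{x}=(x_n)_{n\ge0}$ with $x_{n+2} = a_1x_{n+1} + x_n$ for all $n\ge0$. For an integer $m\ge1$, $\tau(\bm{x}; m)$ is the minimal integer $t \ge 1$ with $x_{n+t}\equiv x_n \pmod m$ for all sufficiently large $n$. The Lehmer sequence is $\ell_n := \frac{\alpha^n - (-\beta)^n}{\alpha + \beta}$ for odd $n$ and $\ell_n := \frac{\alpha^n - (-\beta)^n}{\alpha^2 - \beta^2}$ for even $n$ (integers). A prime $p$ is a primitive divisor of $\ell_n$ if $p \mid \ell_n$ but $p \nmid (\alpha^2-\beta^2)^2\ell_1\cdots\ell_{n-1}$, where $(\alpha^2-\beta^2)^2 = a_1^2D$; it is a high primitive divisor if it is an odd primitive divisor with $p^{\nu_p(\ell_n)} > n$, $\nu_p$ being the $p$-adic valuation. $(D\mid p)$ is the Legendre symbol. *)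

theory Defs
  imports Complex_Main "HOL-Number_Theory.Number_Theory"
begin

definition disc :: "int \<Rightarrow> int" where
  "disc a1 = a1^2 + 4"

definition lroot_alpha :: "int \<Rightarrow> real" where
  "lroot_alpha a1 = (real_of_int a1 + sqrt (real_of_int (disc a1))) / 2"

definition lroot_beta :: "int \<Rightarrow> real" where
  "lroot_beta a1 = (real_of_int a1 - sqrt (real_of_int (disc a1))) / 2"

definition lehmer_real :: "int \<Rightarrow> nat \<Rightarrow> real" where
  "lehmer_real a1 n =
     (let \<alpha> = lroot_alpha a1; \<beta> = lroot_beta a1 in
      if odd n then (\<alpha>^n - (-\<beta>)^n) / (\<alpha> + \<beta>)
      else (\<alpha>^n - (-\<beta>)^n) / (\<alpha>^2 - \<beta>^2))"

definition lehmer :: "int \<Rightarrow> nat \<Rightarrow> int" where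
  "lehmer a1 n = (THE k::int. real_of_int k = lehmer_real a1 n)"

definition in_L :: "int \<Rightarrow> (nat \<Rightarrow> int) \<Rightarrow> bool" where
  "in_L a1 x \<longleftrightarrow> (\<forall>n. x (n+2) = a1 * x (n+1) + x n)"

definition tau :: "(nat \<Rightarrow> int) \<Rightarrow> int \<Rightarrow> nat" where
  "tau x m = (LEAST t. t \<ge> 1 \<and> (\<exists>N. \<forall>n\<ge>N. [x (n+t) = x n] (mod m)))"

definition primitive_divisor :: "int \<Rightarrow> int \<Rightarrow> nat \<Rightarrow> bool" where
  "primitive_divisor a1 p n \<longleftrightarrow> prime p \<and> p dvd lehmer a1 n \<and>
     \<not> p dvd (a1^2 * disc a1 * (\<Prod>k\<in>{1..<n}. lehmer a1 k))"

definition high_primitive_divisor :: "int \<Rightarrow> int \<Rightarrow> nat \<Rightarrow> bool" where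
  "high_primitive_divisor a1 p n \<longleftrightarrow> primitive_divisor a1 p n \<and> odd p \<and>
     p ^ multiplicity p (lehmer a1 n) > int n"

end

theory Submission
  imports Defs
begin


fun U :: "int \<Rightarrow> nat \<Rightarrow> int" where
  "U a 0 = 0" | "U a (Suc 0) = 1" | "U a (Suc (Suc n)) = a * U a (Suc n) + U a n"
fun V :: "int \<Rightarrow> nat \<Rightarrow> int" where
  "V a 0 = 2" | "V a (Suc 0) = a" | "V a (Suc (Suc n)) = a * V a (Suc n) + V a n"

definition W :: "int \<Rightarrow> (nat \<Rightarrow> int) \<Rightarrow> nat \<Rightarrow> int" where
  "W a z j = 2 * z (Suc j) - a * z j"

lemma in_L_U: "in_L a (U a)" unfolding in_L_def by simp
lemma in_L_V: "in_L a (V a)" unfolding in_L_def by simp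

lemma in_L_rec: "in_L a z \<Longrightarrow> z (Suc (Suc n)) = a * z (Suc n) + z n"
  unfolding in_L_def by (metis Suc_1 add_Suc_right Suc_eq_plus1)

lemma in_L_I: "(\<And>n. z (Suc (Suc n)) = a * z (Suc n) + z n) \<Longrightarrow> in_L a z"
  unfolding in_L_def by (metis Suc_1 add_Suc_right Suc_eq_plus1)

lemma in_L_W: "in_L a z \<Longrightarrow> in_L a (W a z)"
  apply (rule in_L_I)
  using in_L_rec[of a z] unfolding W_def by (simp add: algebra_simps)

lemma in_L_lin: "in_L a X \<Longrightarrow> in_L a Y \<Longrightarrow> in_L a (\<lambda>j. c * X j + d * Y j)"
  apply (rule in_L_I)
  using in_L_rec[of a X] in_L_rec[of a Y] by (simp add: algebra_simps)

lemma in_L_shift: "in_L a X \<Longrightarrow> in_L a (\<lambda>j. X (Suc j))"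
  apply (rule in_L_I)
  using in_L_rec[of a X] by simp

lemma det_L:
  assumes "in_L a P" "in_L a Q"
  shows "P j * Q (Suc j) - P (Suc j) * Q j = (-1)^j * (P 0 * Q 1 - P 1 * Q 0)"
proof (induction j)
  case 0 then show ?case by simp
next
  case (Suc j)
  have "P (Suc j) * Q (Suc (Suc j)) - P (Suc (Suc j)) * Q (Suc j) = - (P j * Q (Suc j) - P (Suc j) * Q j)"
    using in_L_rec[OF assms(1), of j] in_L_rec[OF assms(2), of j] by (simp add: algebra_simps)
  then show ?case using Suc by simp
qed

lemma binet:
  fixes al be :: real
  assumes L: "in_L a z" and s: "al + be = of_int a" and p: "al * be = -1"
  shows "(al - be) * of_int (z j) = (of_int (z 1) - be * of_int (z 0)) * al^j + (al * of_int (z 0) - of_int (z 1)) * be^j"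
proof -
  have a2: "al^2 = of_int a * al + 1" using s p by (simp add: power2_eq_square algebra_simps flip: s)
  have b2: "be^2 = of_int a * be + 1" using s p by (simp add: power2_eq_square algebra_simps flip: s)
  define C where "C = (of_int (z 1) - be * of_int (z 0))"
  define C' where "C' = (al * of_int (z 0) - of_int (z 1))"
  have "(al - be) * of_int (z j) = C * al^j + C' * be^j \<and> (al - be) * of_int (z (Suc j)) = C * al^(Suc j) + C' * be^(Suc j)"
  proof (induction j)
    case 0 then show ?case by (simp add: C_def C'_def algebra_simps)
  next
    case (Suc j)
    have "al^(Suc (Suc j)) = al^2 * al^j" by (simp add: power2_eq_square)
    then have e: "al^(Suc (Suc j)) = of_int a * al^(Suc j) + al^j" by (simp add: a2 algebra_simps)
    have "be^(Suc (Suc j)) = be^2 * be^j" by (simp add: power2_eq_square)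
    then have f: "be^(Suc (Suc j)) = of_int a * be^(Suc j) + be^j" by (simp add: b2 algebra_simps)
    have "(al - be) * of_int (z (Suc (Suc j))) = of_int a * ((al - be) * of_int (z (Suc j))) + (al - be) * of_int (z j)"
      using in_L_rec[OF L, of j] by (simp add: algebra_simps)
    also have "\<dots> = C * al^(Suc (Suc j)) + C' * be^(Suc (Suc j))"
      using Suc by (simp only: e f) (simp add: algebra_simps)
    finally show ?case using Suc by simp
  qed
  then show ?thesis by (simp add: C_def C'_def)
qed




locale roots =
  fixes a :: int and al be :: real
  assumes s: "al + be = of_int a" and p: "al * be = -1" and ne: "al \<noteq> be"
begin

lemma U_binet: "(al - be) * of_int (U a k) = al^k - be^k"
  using binet[OF in_L_U s p, of k] by simp

lemma V_binet: "of_int (V a k) = al^k + be^k"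
proof -
  have "(al - be) * of_int (V a k) = (al - be) * (al^k + be^k)"
    using binet[OF in_L_V s p, of k] by (simp add: algebra_simps flip: s)
  then show ?thesis using ne by simp
qed

lemma W_binet:
  assumes L: "in_L a z"
  shows "(al - be) * of_int (W a z j) = (al - be) * ((of_int (z 1) - be * of_int (z 0)) * al^j - (al * of_int (z 0) - of_int (z 1)) * be^j)"
proof -
  have "(al - be) * of_int (W a z j) = 2 * ((al - be) * of_int (z (Suc j))) - of_int a * ((al - be) * of_int (z j))"
    unfolding W_def by (simp add: algebra_simps)
  also have "\<dots> = (al - be) * ((of_int (z 1) - be * of_int (z 0)) * al^j - (al * of_int (z 0) - of_int (z 1)) * be^j)"
    unfolding binet[OF L s p] by (simp add: algebra_simps flip: s)
  finally show ?thesis .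
qed

lemma W_binet': "in_L a z \<Longrightarrow> of_int (W a z j) = (of_int (z 1) - be * of_int (z 0)) * al^j - (al * of_int (z 0) - of_int (z 1)) * be^j"
  using W_binet[of z j] ne by simp

lemma I1:
  assumes L: "in_L a z"
  shows "z (m + 2*k) - (-1)^k * z m = U a k * W a z (m + k)"
proof -
  define C where "C = (of_int (z 1) - be * of_int (z 0))"
  define C' where "C' = (al * of_int (z 0) - of_int (z 1))"
  have m1: "((-1)::real)^k = al^k * be^k" by (simp add: p flip: power_mult_distrib)
  have pa: "al^(m+2*k) = al^m * al^k * al^k" "be^(m+2*k) = be^m * be^k * be^k"
    "al^(m+k) = al^m * al^k" "be^(m+k) = be^m * be^k"
    by (simp_all add: power_add mult_2)
  have "(al - be) * of_int (z (m + 2*k) - (-1)^k * z m) = (al - be) * of_int (z (m + 2*k)) - (-1)^k * ((al - be) * of_int (z m))"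
    by (simp add: algebra_simps)
  also have "\<dots> = (C * al^m * al^k * al^k + C' * be^m * be^k * be^k) - al^k * be^k * (C * al^m + C' * be^m)"
    unfolding binet[OF L s p] m1 C_def C'_def pa by (simp add: algebra_simps)
  also have "\<dots> = ((al - be) * of_int (U a k)) * (C * al^m * al^k - C' * be^m * be^k)"
    unfolding U_binet by (simp add: algebra_simps)
  also have "\<dots> = (al - be) * of_int (U a k * W a z (m + k))"
    unfolding of_int_mult W_binet'[OF L] C_def C'_def pa by (simp add: algebra_simps)
  finally show ?thesis using ne by (simp del: of_int_mult of_int_diff of_int_power)
qed

lemma I2:
  assumes L: "in_L a z"
  shows "z (m + 2*k) + (-1)^k * z m = V a k * z (m + k)"
proof -
  define C where "C = (of_int (z 1) - be * of_int (z 0))"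
  define C' where "C' = (al * of_int (z 0) - of_int (z 1))"
  have m1: "((-1)::real)^k = al^k * be^k" by (simp add: p flip: power_mult_distrib)
  have pa: "al^(m+2*k) = al^m * al^k * al^k" "be^(m+2*k) = be^m * be^k * be^k"
    "al^(m+k) = al^m * al^k" "be^(m+k) = be^m * be^k"
    by (simp_all add: power_add mult_2)
  have "(al - be) * of_int (z (m + 2*k) + (-1)^k * z m) = (al - be) * of_int (z (m + 2*k)) + (-1)^k * ((al - be) * of_int (z m))"
    by (simp add: algebra_simps)
  also have "\<dots> = (C * al^m * al^k * al^k + C' * be^m * be^k * be^k) + al^k * be^k * (C * al^m + C' * be^m)"
    unfolding binet[OF L s p] m1 C_def C'_def pa by (simp add: algebra_simps)
  also have "\<dots> = of_int (V a k) * (C * al^m * al^k + C' * be^m * be^k)"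
    unfolding V_binet by (simp add: algebra_simps)
  also have "\<dots> = of_int (V a k) * ((al - be) * of_int (z (m + k)))"
    unfolding binet[OF L s p] C_def C'_def pa by (simp add: algebra_simps)
  also have "\<dots> = (al - be) * of_int (V a k * z (m + k))" by simp
  finally show ?thesis using ne by (simp del: of_int_mult of_int_add of_int_power)
qed

lemma U_double: "U a (2*h) = U a h * V a h"
proof -
  have "(al - be) * of_int (U a (2*h)) = al^(2*h) - be^(2*h)" by (rule U_binet)
  also have "\<dots> = (al^h - be^h) * (al^h + be^h)"
    by (simp only: mult_2 power_add) (simp add: algebra_simps)
  also have "\<dots> = (al - be) * of_int (U a h * V a h)"
    by (simp only: of_int_mult V_binet U_binet[symmetric] mult.assoc)
  finally show ?thesis using ne by (simp del: of_int_mult)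
qed

end

lemma a_dvd_U: "a dvd U a (2*m)"
proof (induction m)
  case (Suc m)
  have "U a (2 * Suc m) = a * U a (Suc (2*m)) + U a (2*m)"
  proof -
    have "2 * Suc m = Suc (Suc (2*m))" by simp
    then show ?thesis by (simp only: U.simps)
  qed
  then show ?case using Suc by simp
qed simp

lemma a_dvd_V: "a dvd V a (Suc (2*m))"
proof (induction m)
  case (Suc m)
  have "V a (Suc (2 * Suc m)) = a * V a (2*m + 2) + V a (Suc (2*m))"
  proof -
    have "Suc (2 * Suc m) = Suc (Suc (Suc (2*m)))" "2*m+2 = Suc (Suc (2*m))" by simp_all
    then show ?thesis by (simp only: V.simps)
  qed
  then show ?case using Suc by simp
qed simp




lemma roots_lroot: "roots a (lroot_alpha a) (lroot_beta a)"
proof -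
  define s where "s = sqrt (real_of_int (disc a))"
  have D: "real_of_int (disc a) > 0" unfolding disc_def by (simp add: add_nonneg_pos)
  have s2: "s^2 = of_int a ^ 2 + 4" unfolding s_def using D by (simp add: disc_def)
  have sp: "s > 0" unfolding s_def using D by simp
  show ?thesis
    unfolding roots_def lroot_alpha_def lroot_beta_def s_def[symmetric]
    using s2 sp by (auto simp: field_simps power2_eq_square)
qed

lemma lroot_diff: "lroot_alpha a - lroot_beta a = sqrt (real_of_int (disc a))"
  unfolding lroot_alpha_def lroot_beta_def by (simp add: field_simps)

lemma lehmer_eq:
  assumes "real_of_int q = lehmer_real a k"
  shows "lehmer a k = q"
  unfolding lehmer_def using assms by (rule the_equality) (metis assms of_int_eq_iff)

lemma lehmer_even:
  assumes a: "a \<noteq> 0" and k: "even k"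
  shows "U a k = a * lehmer a k"
proof -
  interpret roots a "lroot_alpha a" "lroot_beta a" by (rule roots_lroot)
  obtain m where m: "k = 2*m" using k by blast
  obtain q where q: "U a k = a * q" using a_dvd_U[of a m] m by (auto elim: dvdE)
  have ne': "lroot_alpha a - lroot_beta a \<noteq> 0" using ne by simp
  have "lehmer_real a k = (lroot_alpha a ^ k - lroot_beta a ^ k) / (lroot_alpha a ^ 2 - lroot_beta a ^ 2)"
    unfolding lehmer_real_def Let_def using k by simp
  also have "lroot_alpha a ^ 2 - lroot_beta a ^ 2 = (lroot_alpha a - lroot_beta a) * of_int a"
    by (simp add: power2_eq_square algebra_simps flip: s)
  also have "lroot_alpha a ^ k - lroot_beta a ^ k = (lroot_alpha a - lroot_beta a) * of_int a * of_int q"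
    using U_binet[of k] q by simp
  finally have "lehmer_real a k = of_int q" using ne' a by simp
  then show ?thesis using q lehmer_eq by metis
qed

lemma lehmer_odd:
  assumes a: "a \<noteq> 0" and k: "odd k"
  shows "V a k = a * lehmer a k"
proof -
  interpret roots a "lroot_alpha a" "lroot_beta a" by (rule roots_lroot)
  obtain m where m: "k = Suc (2*m)" using k oddE by (metis Suc_eq_plus1)
  obtain q where q: "V a k = a * q" using a_dvd_V[of a m] m by (auto elim: dvdE)
  have "lehmer_real a k = (lroot_alpha a ^ k + lroot_beta a ^ k) / (lroot_alpha a + lroot_beta a)"
    unfolding lehmer_real_def Let_def using k by simp
  also have "lroot_alpha a ^ k + lroot_beta a ^ k = of_int a * of_int q"
    using V_binet[of k] q by simp
  finally have "lehmer_real a k = of_int q" using a by (simp add: s)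
  then show ?thesis using q lehmer_eq by metis
qed




lemmas I1g = roots.I1[OF roots_lroot]
lemmas I2g = roots.I2[OF roots_lroot]
lemmas U_doubleg = roots.U_double[OF roots_lroot]

lemma card_sol_le1:
  fixes p :: int
  assumes LP: "in_L a P" and LQ: "in_L a Q" and pr: "prime p" and v: "v \<ge> 1"
    and det: "\<not> p dvd (P 0 * Q 1 - P 1 * Q 0)"
  shows "card {t \<in> {0..<p^v}. p^v dvd P j + t * Q j} \<le> 1"
proof -
  have dj: "\<not> p dvd (P j * Q (Suc j) - P (Suc j) * Q j)"
    unfolding det_L[OF LP LQ] using det pr
    by (cases "even j") (auto simp: dvd_diff_commute)
  have pP: "p dvd p^v" using v by (simp add: dvd_power)
  define S where "S = {t \<in> {0..<p^v}. p^v dvd P j + t * Q j}"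
  have fin: "finite S" by (rule finite_subset[of _ "{0..<p^v}"]) (auto simp: S_def)
  have "\<forall>t1\<in>S. \<forall>t2\<in>S. t1 = t2"
  proof (intro ballI)
    fix t1 t2 assume t1: "t1 \<in> S" and t2: "t2 \<in> S"
    show "t1 = t2"
    proof (cases "p dvd Q j")
      case True
      have "p dvd P j + t1 * Q j" using t1 pP unfolding S_def by (auto intro: dvd_trans)
      moreover have "p dvd t1 * Q j" using True by simp
      ultimately have "p dvd P j" using dvd_diff[of p "P j + t1*Q j" "t1 * Q j"] by simp
      then have "p dvd (P j * Q (Suc j) - P (Suc j) * Q j)" using True by simp
      then show ?thesis using dj by simp
    next
      case False
      then have cop: "coprime (p^v) (Q j)" using pr
        by (simp add: prime_imp_coprime coprime_power_left_iff)
      have "p^v dvd (P j + t1 * Q j) - (P j + t2 * Q j)" using t1 t2 unfolding S_def by (intro dvd_diff) auto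
      then have "p^v dvd (t1 - t2) * Q j" by (simp add: algebra_simps)
      then have d: "p^v dvd (t1 - t2)" using cop coprime_dvd_mult_left_iff by blast
      show ?thesis
      proof (rule ccontr)
        assume "t1 \<noteq> t2"
        then have "\<bar>p^v\<bar> \<le> \<bar>t1 - t2\<bar>" using d dvd_imp_le_int by simp
        moreover have "\<bar>t1 - t2\<bar> < p^v" using t1 t2 unfolding S_def by auto
        ultimately show False by simp
      qed
    qed
  qed
  then show ?thesis using card_le_Suc0_iff_eq[OF fin] unfolding S_def by simp
qed




locale mainctx =
  fixes a p :: int and n h v :: nat
  assumes a0: "a \<noteq> 0" and pr: "prime p" and podd: "odd p"
    and nh: "n = 2*h" and h2: "h \<ge> 2" and v1: "v \<ge> 1"
    and PU: "p^v dvd U a n"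
    and pa: "\<not> p dvd a" and pD: "\<not> p dvd disc a"
    and pUk: "\<And>k. 1 \<le> k \<Longrightarrow> k < n \<Longrightarrow> even k \<Longrightarrow> \<not> p dvd U a k"
    and pVk: "\<And>k. 1 \<le> k \<Longrightarrow> k < n \<Longrightarrow> odd k \<Longrightarrow> \<not> p dvd V a k"
    and big: "int n < p^v"
begin

lemma cancel: "\<not> p dvd c \<Longrightarrow> p^v dvd c * d \<Longrightarrow> p^v dvd d"
proof -
  assume "\<not> p dvd c" "p^v dvd c * d"
  then have "coprime (p^v) c" using pr by (simp add: prime_imp_coprime)
  then show ?thesis using \<open>p^v dvd c * d\<close> coprime_dvd_mult_right_iff by blast
qed

lemma cancel2: "p^v dvd 2 * d \<Longrightarrow> p^v dvd d"
proof -
  have "\<not> p dvd 2"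
  proof
    assume "p dvd 2"
    then have "p \<le> 2" using zdvd_imp_le[of p 2] by simp
    moreover have "p \<ge> 2" using pr prime_ge_2_int by blast
    ultimately have "p = 2" by simp
    then show False using podd by simp
  qed
  then show "p^v dvd 2 * d \<Longrightarrow> p^v dvd d" using cancel by blast
qed

lemma h_lt: "1 \<le> h" "h < n" using nh h2 by auto

lemma anti: assumes L: "in_L a z" shows "p^v dvd z (m + n) + z m"
proof (cases "even h")
  case True
  have "\<not> p dvd U a h" using pUk[OF h_lt] True by simp
  moreover have "p^v dvd U a h * V a h" using PU U_doubleg[of a h] nh by simp
  ultimately have "p^v dvd V a h" by (rule cancel)
  moreover have "z (m + n) + z m = V a h * z (m + h)" using I2g[OF L, of m h] True nh by simp
  ultimately show ?thesis by simp
next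
  case False
  have "\<not> p dvd V a h" using pVk[OF h_lt] False by simp
  moreover have "p^v dvd V a h * U a h" using PU U_doubleg[of a h] nh by (simp add: mult.commute)
  ultimately have "p^v dvd U a h" by (rule cancel)
  moreover have "z (m + n) + z m = U a h * W a z (m + h)" using I1g[OF L, of m h] False nh by simp
  ultimately show ?thesis by simp
qed

lemma hodd_red: assumes L: "in_L a z" and ho: "odd h" and d: "p^v dvd z (m + h)"
  shows "p^v dvd z m"
proof -
  have "\<not> p dvd V a h" using pVk[OF h_lt] ho by simp
  have "z (m + n) - z m = V a h * z (m + h)" using I2g[OF L, of m h] ho nh by simp
  then have "p^v dvd z (m + n) - z m" using d by simp
  then have "p^v dvd (z (m + n) + z m) - (z (m + n) - z m)" by (rule dvd_diff[OF anti[OF L, of m]])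
  moreover have "(z (m + n) + z m) - (z (m + n) - z m) = 2 * z m" by simp
  ultimately show ?thesis using cancel2 by metis
qed

lemma heven_red: assumes L: "in_L a z" and he: "even h" and d: "p^v dvd W a z (m + h)"
  shows "p^v dvd z m"
proof -
  have "z (m + n) - z m = U a h * W a z (m + h)" using I1g[OF L, of m h] he nh by simp
  then have "p^v dvd z (m + n) - z m" using d by simp
  then have "p^v dvd (z (m + n) + z m) - (z (m + n) - z m)" by (rule dvd_diff[OF anti[OF L, of m]])
  moreover have "(z (m + n) + z m) - (z (m + n) - z m) = 2 * z m" by simp
  ultimately show ?thesis using cancel2 by metis
qed

lemma red_n: assumes L: "in_L a z" and d: "p^v dvd z j" shows "p^v dvd z (j mod n)"
proof -
  have "p^v dvd z (r + q * n) \<Longrightarrow> p^v dvd z r" for r q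
  proof (induction q)
    case (Suc q)
    have "p^v dvd z ((r + q * n) + n) + z (r + q*n)" by (rule anti[OF L])
    moreover have "r + Suc q * n = (r + q * n) + n" by simp
    ultimately have "p^v dvd z (r + q*n)" using Suc.prems
      by (metis dvd_add_right_iff)
    then show ?case using Suc.IH by blast
  qed simp
  moreover have "j = j mod n + (j div n) * n" by simp
  ultimately show ?thesis using d by metis
qed

lemma red_h: assumes L: "in_L a z" and ho: "odd h" and d: "p^v dvd z j" shows "p^v dvd z (j mod h)"
proof -
  have "p^v dvd z (r + q * h) \<Longrightarrow> p^v dvd z r" for r q
  proof (induction q)
    case (Suc q)
    have e: "r + Suc q * h = (r + q*h) + h" by simp
    have "p^v dvd z (r + q*h)" using hodd_red[OF L ho, of "r + q*h"] Suc.prems unfolding e by blast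
    then show ?case using Suc.IH by blast
  qed simp
  moreover have "j = j mod h + (j div h) * h" by simp
  ultimately show ?thesis using d by metis
qed

lemma per2n: assumes L: "in_L a z" shows "p^v dvd z (m + 2*n) - z m"
proof -
  have "p^v dvd (z ((m + n) + n) + z (m + n)) - (z (m + n) + z m)"
    using anti[OF L, of "m+n"] anti[OF L, of m] by (intro dvd_diff)
  moreover have "m + 2*n = m + n + n" by simp
  then have e1: "z (m + 2*n) = z (m + n + n)" by (rule arg_cong)
  then have "z (m + 2*n) - z m = z (m + n + n) + z (m + n) - (z (m + n) + z m)" by simp
  ultimately show ?thesis by metis
qed

end




definition Xs :: "int \<Rightarrow> nat \<Rightarrow> int" where "Xs a j = U a (Suc j) - a * U a j"
definition xt :: "int \<Rightarrow> int \<Rightarrow> nat \<Rightarrow> int" where "xt a t j = Xs a j + t * U a j"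

lemma in_L_Xs: "in_L a (Xs a)"
  unfolding Xs_def by (rule in_L_I) (simp add: algebra_simps)

lemma in_L_xt: "in_L a (xt a t)"
  unfolding xt_def using in_L_rec[OF in_L_Xs] by (intro in_L_I) (simp add: algebra_simps)

lemma W_xt: "W a (xt a t) j = W a (Xs a) j + t * W a (U a) j"
  unfolding W_def xt_def by (simp add: algebra_simps)

lemma det1: "Xs a 0 * U a 1 - Xs a 1 * U a 0 = 1"
  by (simp add: Xs_def)

lemma det2: "W a (Xs a) 0 * W a (U a) 1 - W a (Xs a) 1 * W a (U a) 0 = - disc a"
  by (simp add: W_def Xs_def disc_def power2_eq_square eval_nat_numeral algebra_simps)

context mainctx begin

lemma exists_t: "\<exists>t. \<forall>j. \<not> p^v dvd xt a t j \<and> \<not> p^v dvd W a (xt a t) j"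
proof -
  define P where "P = p^v"
  define Sx where "Sx i = {t \<in> {0..<P}. P dvd Xs a i + t * U a i}" for i
  define Sw where "Sw i = {t \<in> {0..<P}. P dvd W a (Xs a) i + t * W a (U a) i}" for i
  define F where "F i = (if odd h then (if i < h then Sx i else Sw (i - h)) else Sx i)" for i
  define B where "B = {t \<in> {0..<P}. \<exists>j. P dvd xt a t j \<or> P dvd W a (xt a t) j}"
  have np1: "\<not> p dvd 1" using pr by (simp add: prime_int_iff)
  have cx: "card (Sx i) \<le> 1" for i
    unfolding Sx_def P_def by (rule card_sol_le1[OF in_L_Xs in_L_U pr v1]) (subst det1, rule np1)
  have cw: "card (Sw i) \<le> 1" for i
    unfolding Sw_def P_def
    by (rule card_sol_le1[OF in_L_W[OF in_L_Xs] in_L_W[OF in_L_U] pr v1]) (subst det2, simp add: pD)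
  have cF: "card (F i) \<le> 1" for i unfolding F_def using cx cw by simp
  have sub: "B \<subseteq> (\<Union>i\<in>{..<n}. F i)"
  proof
    fix t assume tB: "t \<in> B"
    then obtain j where tr: "t \<in> {0..<P}" and j: "P dvd xt a t j \<or> P dvd W a (xt a t) j"
      unfolding B_def by blast
    have L: "in_L a (xt a t)" by (rule in_L_xt)
    have LW: "in_L a (W a (xt a t))" by (rule in_L_W[OF L])
    have n0: "0 < n" using nh h2 by simp
    have inSx: "t \<in> Sx i" if "P dvd xt a t i" for i using that tr unfolding Sx_def xt_def by simp
    have inSw: "t \<in> Sw i" if "P dvd W a (xt a t) i" for i using that tr unfolding Sw_def W_xt by simp
    show "t \<in> (\<Union>i\<in>{..<n}. F i)"
    proof (cases "odd h")
      case True
      show ?thesis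
      proof (cases "P dvd xt a t j")
        case True
        then have "P dvd xt a t (j mod h)" using red_h[OF L \<open>odd h\<close>] unfolding P_def by blast
        moreover have "j mod h < h" using h2 by simp
        ultimately show ?thesis using inSx \<open>odd h\<close> nh unfolding F_def
          by (intro UN_I[of "j mod h"]) auto
      next
        case False
        then have "P dvd W a (xt a t) j" using j by simp
        then have "P dvd W a (xt a t) (j mod h)" using red_h[OF LW \<open>odd h\<close>] unfolding P_def by blast
        moreover have "j mod h < h" using h2 by simp
        ultimately show ?thesis using inSw \<open>odd h\<close> nh unfolding F_def
          by (intro UN_I[of "h + j mod h"]) auto
      qed
    next
      case False
      show ?thesis
      proof (cases "P dvd xt a t j")
        case True
        then have "P dvd xt a t (j mod n)" using red_n[OF L] unfolding P_def by blast
        then show ?thesis using inSx False n0 unfolding F_def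
          by (intro UN_I[of "j mod n"]) auto
      next
        case c2: False
        define i where "i = j mod n"
        have "P dvd W a (xt a t) j" using j c2 by simp
        then have "P dvd W a (xt a t) i" using red_n[OF LW] unfolding P_def i_def by blast
        moreover have "P dvd W a (xt a t) (i + n) + W a (xt a t) i" using anti[OF LW] unfolding P_def by blast
        ultimately have "P dvd W a (xt a t) ((i + h) + h)" using nh
          by (metis add.assoc dvd_add_left_iff mult_2)
        then have "P dvd xt a t (i + h)" using heven_red[OF L] False unfolding P_def by blast
        then have "P dvd xt a t ((i + h) mod n)" using red_n[OF L] unfolding P_def by blast
        then show ?thesis using inSx False n0 unfolding F_def
          by (intro UN_I[of "(i + h) mod n"]) auto
      qed
    qed
  qed
  have finF: "finite (F i)" for i
    unfolding F_def Sx_def Sw_def by (auto intro: finite_subset[of _ "{0..<P}"])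
  have "card B \<le> card (\<Union>i\<in>{..<n}. F i)"
    using sub finF by (intro card_mono) auto
  also have "\<dots> \<le> (\<Sum>i\<in>{..<n}. card (F i))" by (rule card_UN_le) simp
  also have "\<dots> \<le> (\<Sum>i\<in>{..<n}. 1)" by (rule sum_mono) (rule cF)
  also have "\<dots> = n" by simp
  finally have cB: "card B \<le> n" .
  have "card {0..<P} = nat P" by simp
  then have "card B < card {0..<P}" using cB big unfolding P_def by linarith
  moreover have finB: "finite B" by (rule finite_subset[of _ "{0..<P}"]) (auto simp: B_def)
  ultimately have "\<not> {0..<P} \<subseteq> B" using card_mono[OF finB, of "{0..<P}"] by linarith
  then obtain t where "t \<in> {0..<P}" "t \<notin> B" by blast
  then show ?thesis unfolding B_def P_def by blast
qed

end




context mainctx begin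

lemma final:
  "\<exists>x. in_L a x \<and> tau x (p^v) = 2*n \<and>
      (\<forall>s t. 0 < s \<and> s < t \<and> t < 2*n \<and> even (t - s) \<longrightarrow> \<not> [x s = x t] (mod p^v)) \<and>
      (\<forall>j. \<not> [x j = 0] (mod p^v))"
proof -
  obtain t0 where t0: "\<forall>j. \<not> p^v dvd xt a t0 j \<and> \<not> p^v dvd W a (xt a t0) j"
    using exists_t by blast
  define x where "x = xt a t0"
  have L: "in_L a x" unfolding x_def by (rule in_L_xt)
  have nz: "\<not> p^v dvd x j" "\<not> p^v dvd W a x j" for j using t0 unfolding x_def by auto
  have dist: "\<not> p^v dvd x s - x t" if st: "0 < s" "s < t" "t < 2*n" "even (t - s)" for s t
  proof
    assume d: "p^v dvd x s - x t"
    then have d': "p^v dvd x t - x s" by (simp add: dvd_diff_commute)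
    define k where "k = (t - s) div 2"
    have tk: "t = s + 2*k" using st unfolding k_def by auto
    have k1: "1 \<le> k" "k < n" using st tk by auto
    show False
    proof (cases "even k")
      case True
      have "x t - x s = U a k * W a x (s + k)" using I1g[OF L, of s k] tk True by simp
      then have "p^v dvd W a x (s + k)" using d' cancel pUk[OF k1 True] by metis
      then show False using nz by blast
    next
      case False
      have "x t - x s = V a k * x (s + k)" using I2g[OF L, of s k] tk False by simp
      then have "p^v dvd x (s + k)" using d' cancel pVk[OF k1 False] by metis
      then show False using nz by blast
    qed
  qed
  have p2n: "p^v dvd x (j + q * (2*n)) - x j" for j q
  proof (induction q)
    case (Suc q)
    have "p^v dvd x ((j + q * (2*n)) + 2*n) - x (j + q * (2*n))" by (rule per2n[OF L])
    then have "p^v dvd (x ((j + q * (2*n)) + 2*n) - x (j + q * (2*n))) + (x (j + q * (2*n)) - x j)"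
      using Suc.IH by (rule dvd_add)
    then show ?case by (simp add: algebra_simps)
  qed simp
  have no_per: False if per: "\<forall>j. p^v dvd x (j + u) - x j" and u: "1 \<le> u" "u < 2*n" "even u" for u
  proof -
    have "p^v dvd x (1 + u) - x 1" using per by blast
    then have "p^v dvd x 1 - x (1 + u)" by (simp add: dvd_diff_commute)
    moreover have "1 + u < 2*n" using u by presburger
    ultimately show False using dist[of 1 "1 + u"] u by auto
  qed
  have no_per2: False if per: "\<forall>j. p^v dvd x (j + u) - x j" and u: "1 \<le> u" "u < n" for u
  proof -
    have "p^v dvd (x ((j + u) + u) - x (j + u)) + (x (j + u) - x j)" for j
      using per by (intro dvd_add) blast+
    then have "\<forall>j. p^v dvd x (j + (u + u)) - x j" by (simp add: add.assoc)
    moreover have "even (u + u)" "1 \<le> u + u" "u + u < 2*n" using u by auto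
    ultimately show False using no_per[of "u + u"] by blast
  qed
  have tau2n: "tau x (p^v) = 2*n"
    unfolding tau_def
  proof (rule Least_equality)
    show "1 \<le> 2*n \<and> (\<exists>N. \<forall>m\<ge>N. [x (m + 2*n) = x m] (mod p^v))"
      using per2n[OF L] nh h2 by (auto simp: cong_iff_dvd_diff)
  next
    fix y assume y: "1 \<le> y \<and> (\<exists>N. \<forall>m\<ge>N. [x (m + y) = x m] (mod p^v))"
    then obtain N where N: "\<forall>m\<ge>N. p^v dvd x (m + y) - x m" by (auto simp: cong_iff_dvd_diff)
    have per: "\<forall>j. p^v dvd x (j + y) - x j"
    proof
      fix j
      define J where "J = j + N * (2*n)"
      have "1 \<le> 2*n" using nh h2 by simp
      then have "N * 1 \<le> N * (2*n)" by (rule mult_le_mono2)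
      then have "N \<le> N * (2*n)" by (simp only: mult_1_right)
      then have "J \<ge> N" unfolding J_def by linarith
      then have a1: "p^v dvd x (J + y) - x J" using N by blast
      have a2: "p^v dvd x ((j + y) + N * (2*n)) - x (j + y)" by (rule p2n)
      have a3: "p^v dvd x J - x j" unfolding J_def by (rule p2n)
      have "p^v dvd (x (J + y) - x J) + (x J - x j) - (x ((j + y) + N * (2*n)) - x (j + y))"
        by (rule dvd_diff[OF dvd_add[OF a1 a3] a2])
      moreover have "J + y = (j + y) + N * (2*n)" unfolding J_def by simp
      ultimately show "p^v dvd x (j + y) - x j" by simp
    qed
    show "2*n \<le> y"
    proof (rule ccontr)
      assume "\<not> 2*n \<le> y"
      then have yl: "y < 2*n" by simp
      show False
      proof (cases "even y")
        case True then show False using no_per[of y] per y yl by blast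
      next
        case False
        have "y \<noteq> n" using False nh by auto
        show False
        proof (cases "y < n")
          case True then show False using no_per2[of y] per y by blast
        next
          case c2: False
          define u where "u = 2*n - y"
          have u1a: "1 \<le> u" unfolding u_def using yl by arith
          have u1b: "u < n" unfolding u_def using c2 \<open>y \<noteq> n\<close> yl by arith
          note u1 = u1a u1b
          have "\<forall>j. p^v dvd x (j + u) - x j"
          proof
            fix j
            have b1: "p^v dvd x ((j + u) + y) - x (j + u)" using per by blast
            have b2: "p^v dvd x (j + 1 * (2*n)) - x j" by (rule p2n)
            have "(j + u) + y = j + 1 * (2*n)" unfolding u_def using yl by simp
            have "p^v dvd (x (j + 1 * (2*n)) - x j) - (x ((j + u) + y) - x (j + u))"
              by (rule dvd_diff[OF b2 b1])
            moreover have "x ((j + u) + y) = x (j + 1 * (2*n))"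
              using \<open>(j + u) + y = j + 1 * (2*n)\<close> by (rule arg_cong)
            then have "(x (j + 1 * (2*n)) - x j) - (x ((j + u) + y) - x (j + u)) = x (j + u) - x j"
              by simp
            ultimately show "p^v dvd x (j + u) - x j" by simp
          qed
          then show False using no_per2 u1 by blast
        qed
      qed
    qed
  qed
  show ?thesis
  proof (intro exI[of _ x] conjI allI impI)
    show "in_L a x" by (rule L)
    show "tau x (p^v) = 2*n" by (rule tau2n)
  next
    fix s t assume "0 < s \<and> s < t \<and> t < 2*n \<and> even (t - s)"
    then show "\<not> [x s = x t] (mod p^v)" using dist by (auto simp: cong_iff_dvd_diff)
  next
    fix j show "\<not> [x j = 0] (mod p^v)" using nz by (simp add: cong_0_iff)
  qed
qed

end



lemma prime_not_dvd_big:
  fixes p a1 :: int and n :: nat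
  assumes pr: "prime p" and nd: "\<not> p dvd (a1^2 * disc a1 * (\<Prod>k\<in>{1..<n}. lehmer a1 k))"
  shows "\<not> p dvd a1" "\<not> p dvd disc a1" "\<And>k. 1 \<le> k \<Longrightarrow> k < n \<Longrightarrow> \<not> p dvd lehmer a1 k"
proof -
  show "\<not> p dvd a1"
  proof
    assume "p dvd a1"
    then have "p dvd a1^2 * disc a1 * (\<Prod>k\<in>{1..<n}. lehmer a1 k)" by (simp add: power2_eq_square)
    then show False using nd by simp
  qed
  show "\<not> p dvd disc a1"
  proof
    assume "p dvd disc a1"
    then have "p dvd a1^2 * disc a1 * (\<Prod>k\<in>{1..<n}. lehmer a1 k)" by simp
    then show False using nd by simp
  qed
  fix k assume k: "1 \<le> k" "k < n"
  show "\<not> p dvd lehmer a1 k"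
  proof
    assume "p dvd lehmer a1 k"
    moreover have "lehmer a1 k dvd (\<Prod>k\<in>{1..<n}. lehmer a1 k)" using k by (intro dvd_prodI) auto
    ultimately have "p dvd (\<Prod>k\<in>{1..<n}. lehmer a1 k)" by (rule dvd_trans)
    then have "p dvd a1^2 * disc a1 * (\<Prod>k\<in>{1..<n}. lehmer a1 k)" by simp
    then show False using nd by simp
  qed
qed

theorem mainTheorem14:
  fixes a1 p :: int and n :: nat
  assumes "a1 \<ge> 1" and "n \<ge> 4" and "even n"
    and "high_primitive_divisor a1 p n"
    and "Legendre (disc a1) p = -1"
  shows "let v = multiplicity p (lehmer a1 n) in
    \<exists>x. in_L a1 x \<and> tau x (p^v) = 2*n \<and>
      (\<forall>s t. 0 < s \<and> s < t \<and> t < 2*n \<and> even (t - s) \<longrightarrow> \<not> [x s = x t] (mod p^v)) \<and>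
      (\<forall>j. \<not> [x j = 0] (mod p^v))"
proof -
  define v where "v = multiplicity p (lehmer a1 n)"
  define h where "h = n div 2"
  have a0: "a1 \<noteq> 0" using assms(1) by simp
  have nh: "n = 2*h" unfolding h_def using assms(3) by simp
  have h2: "h \<ge> 2" unfolding h_def using assms(2) by simp
  have pr: "prime p" and podd: "odd p" and big: "int n < p^v"
    and nd: "\<not> p dvd (a1^2 * disc a1 * (\<Prod>k\<in>{1..<n}. lehmer a1 k))"
    using assms(4) unfolding high_primitive_divisor_def primitive_divisor_def v_def by auto
  have v1: "v \<ge> 1"
  proof (rule ccontr)
    assume "\<not> v \<ge> 1" then have "v = 0" by simp
    then show False using big assms(2) by simp
  qed
  have "p^v dvd lehmer a1 n" unfolding v_def by (rule multiplicity_dvd)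
  then have PU: "p^v dvd U a1 n" using lehmer_even[OF a0 assms(3)] by simp
  note nb = prime_not_dvd_big[OF pr nd]
  have pUk: "\<not> p dvd U a1 k" if "1 \<le> k" "k < n" "even k" for k
  proof
    assume "p dvd U a1 k"
    then have "p dvd a1 * lehmer a1 k" using lehmer_even[OF a0 \<open>even k\<close>] by simp
    then have "p dvd a1 \<or> p dvd lehmer a1 k" using pr by (simp add: prime_dvd_mult_iff)
    then show False using nb that by blast
  qed
  have pVk: "\<not> p dvd V a1 k" if "1 \<le> k" "k < n" "odd k" for k
  proof
    assume "p dvd V a1 k"
    then have "p dvd a1 * lehmer a1 k" using lehmer_odd[OF a0 \<open>odd k\<close>] by simp
    then have "p dvd a1 \<or> p dvd lehmer a1 k" using pr by (simp add: prime_dvd_mult_iff)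
    then show False using nb that by blast
  qed
  interpret mainctx a1 p n h v
    by unfold_locales (use a0 pr podd nh h2 v1 PU nb pUk pVk big in auto)
  show ?thesis unfolding Let_def v_def[symmetric] by (rule final)
qed

end
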